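(* Let $R\subset\mathbb{R}^N$ be a finite reduced root system with positive roots $R_+$ and multiplicity function $\kappa$, with Dunkl operators $\mathcal{D}_i$ as in the context. For $a,b\in\mathbb{R}^N$ set $J_{a,b}=\langle a,x\rangle\langle b,\nabla_\kappa\rangle-\langle b,x\rangle\langle a,\nabla_\kappa\rangle$ and $\mathcal{J}=\sum_{1\le i<j\le N}J_{\varepsilon_i,\varepsilon_j}^2$, where $\varepsilon_i$ are the standard unit vectors. Then, as operators on polynomials, \[ \mathcal{J}=|x|^2\Delta_\kappa-\langle x,\nabla_\kappa\rangle^2-(N-2)\langle x,\nabla_\kappa\rangle-2\sum_{v\in R_+}\kappa_v\sigma_v\langle x,\nabla_\kappa\rangle . \]
   Context: Vectors in $\mathbb{R}^N$ are row vectors, $\langle x,y\rangle=\sum x_iy_i$, $|x|^2=\langle x,x\rangle$. For $v\neq0$, $x\sigma_v=x-2\frac{\langle x,v\rangle}{|v|^2}v$. A finite reduced root system is a finite set $R$ of nonzero vectors with $u\sigma_v\in R$ for $u,v\in R$ and such that $u,cu\in R$ implies $c=\pm1$; $W(R)$ is the group generated by the $\sigma_v$; $R_+=\{v\in R:\langle u_0,v\rangle>0\}$ for a fixed $u_0$ with $\langle u_0,v\rangle\ne0$ for all $v\in R$. A multiplicity function $v\mapsto\kappa_v$ is constant on $W(R)$-orbits (values real or formal parameters). Dunkl operators: $\mathcal{D}_if(x)=\partial_if(x)+\sum_{v\in R_+}\kappa_v\frac{f(x)-f(x\sigma_v)}{\langle x,v\rangle}v_i$; $\langle a,\nabla_\kappa\rangle=\sum_ia_i\mathcal{D}_i$;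 $\langle x,\nabla_\kappa\rangle=\sum_ix_i\mathcal{D}_i$; $\Delta_\kappa=\sum_i\mathcal{D}_i^2$. The operator $\sigma_v$ acts by $(\sigma_vf)(x)=f(x\sigma_v)$; $\langle a,x\rangle$ and $|x|^2$ act by multiplication. *)

theory Defs
  imports "HOL-Analysis.Analysis"
begin

type_synonym 'n fn = "(real^'n) \<Rightarrow> real"

definition refl :: "real^'n::finite \<Rightarrow> real^'n \<Rightarrow> real^'n" where
  "refl v x = x - (2 * (x \<bullet> v) / (v \<bullet> v)) *\<^sub>R v"

definition root_system :: "(real^'n::finite) set \<Rightarrow> bool" where
  "root_system R \<longleftrightarrow> finite R \<and> 0 \<notin> R \<and>
     (\<forall>u\<in>R. \<forall>v\<in>R. refl v u \<in> R) \<and>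
     (\<forall>u\<in>R. \<forall>c::real. c *\<^sub>R u \<in> R \<longrightarrow> c = 1 \<or> c = -1)"

definition pos_roots :: "(real^'n::finite) set \<Rightarrow> real^'n \<Rightarrow> (real^'n) set" where
  "pos_roots R u0 = {v \<in> R. u0 \<bullet> v > 0}"

definition divdiff :: "real^'n::finite \<Rightarrow> 'n fn \<Rightarrow> 'n fn" where
  "divdiff v f x = (if x \<bullet> v \<noteq> 0 then (f x - f (refl v x)) / (x \<bullet> v)
     else Lim (at x within {y. y \<bullet> v \<noteq> 0}) (\<lambda>y. (f y - f (refl v y)) / (y \<bullet> v)))"

definition partial :: "'n::finite \<Rightarrow> 'n fn \<Rightarrow> 'n fn" where
  "partial i f x = frechet_derivative f (at x) (axis i 1)"

definition dunkl :: "(real^'n::finite) set \<Rightarrow> real^'n \<Rightarrow> (real^'n \<Rightarrow> real) \<Rightarrow> 'n \<Rightarrow> 'n fn \<Rightarrow> 'n fn" where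
  "dunkl R u0 \<kappa> i f x = partial i f x
     + (\<Sum>v\<in>pos_roots R u0. \<kappa> v * divdiff v f x * v $ i)"

definition dir_dunkl :: "(real^'n::finite) set \<Rightarrow> real^'n \<Rightarrow> (real^'n \<Rightarrow> real) \<Rightarrow> real^'n \<Rightarrow> 'n fn \<Rightarrow> 'n fn" where
  "dir_dunkl R u0 \<kappa> a f x = (\<Sum>i\<in>UNIV. a $ i * dunkl R u0 \<kappa> i f x)"

definition euler_dunkl :: "(real^'n::finite) set \<Rightarrow> real^'n \<Rightarrow> (real^'n \<Rightarrow> real) \<Rightarrow> 'n fn \<Rightarrow> 'n fn" where
  "euler_dunkl R u0 \<kappa> f x = (\<Sum>i\<in>UNIV. x $ i * dunkl R u0 \<kappa> i f x)"

definition dunkl_laplacian :: "(real^'n::finite) set \<Rightarrow> real^'n \<Rightarrow> (real^'n \<Rightarrow> real) \<Rightarrow> 'n fn \<Rightarrow> 'n fn" where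
  "dunkl_laplacian R u0 \<kappa> f x = (\<Sum>i\<in>UNIV. dunkl R u0 \<kappa> i (dunkl R u0 \<kappa> i f) x)"

definition Jop :: "(real^'n::finite) set \<Rightarrow> real^'n \<Rightarrow> (real^'n \<Rightarrow> real) \<Rightarrow> real^'n \<Rightarrow> real^'n \<Rightarrow> 'n fn \<Rightarrow> 'n fn" where
  "Jop R u0 \<kappa> a b f x = (a \<bullet> x) * dir_dunkl R u0 \<kappa> b f x - (b \<bullet> x) * dir_dunkl R u0 \<kappa> a f x"

definition Jcal where
  "Jcal R u0 \<kappa> f x = (\<Sum>(i,j)\<in>{(i::'n::{finite,linorder},j). i < j}.
     Jop R u0 \<kappa> (axis i 1) (axis j 1) (Jop R u0 \<kappa> (axis i 1) (axis j 1) f) (x::(real,'n) vec))"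

end

theory Submission
  imports Defs
begin

abbreviation RPF where "RPF \<equiv> real_polynomial_function"

lemma poly_deriv:
  "real_polynomial_function (f::real^'n::finite \<Rightarrow> real) \<Longrightarrow>
   \<exists>f'. (\<forall>x. (f has_derivative f' x) (at x)) \<and> (\<forall>h. real_polynomial_function (\<lambda>x. f' x h))"
proof (induction f rule: real_polynomial_function.induct)
  case (linear f)
  then show ?case
    by (rule_tac x="\<lambda>x. f" in exI) (auto intro: bounded_linear_imp_has_derivative)
next
  case (const c)
  then show ?case by (rule_tac x="\<lambda>x h. 0" in exI) auto
next
  case (add f g)
  then obtain f' g' where "\<forall>x. (f has_derivative f' x) (at x)" "\<forall>h. RPF (\<lambda>x. f' x h)"
      "\<forall>x. (g has_derivative g' x) (at x)" "\<forall>h. RPF (\<lambda>x. g' x h)" by blast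
  then show ?case
    by (rule_tac x="\<lambda>x h. f' x h + g' x h" in exI) (auto intro: has_derivative_add)
next
  case (mult f g)
  then obtain f' g' where "\<forall>x. (f has_derivative f' x) (at x)" "\<forall>h. RPF (\<lambda>x. f' x h)"
      "\<forall>x. (g has_derivative g' x) (at x)" "\<forall>h. RPF (\<lambda>x. g' x h)" by blast
  then show ?case
    using mult.hyps by (rule_tac x="\<lambda>x h. f x * g' x h + f' x h * g x" in exI) (auto intro!: has_derivative_mult real_polynomial_function.intros(3,4))
qed

lemma refl_diff: "x - refl v x = ((2 / (v \<bullet> v)) * (x \<bullet> v)) *\<^sub>R v"
  by (simp add: refl_def)

lemma bl_refl: "bounded_linear (refl v)"
proof -
  have h: "bounded_linear (\<lambda>x::real^'a. 2 / (v \<bullet> v) * (x \<bullet> v))"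
    using bounded_linear_compose[OF bounded_linear_mult_right[of "2 / (v \<bullet> v)"] bounded_linear_inner_left[of v]] .
  have "bounded_linear (\<lambda>x::real^'a. (2 / (v \<bullet> v) * (x \<bullet> v)) *\<^sub>R v)"
    using bounded_linear_compose[OF bounded_linear_scaleR_left[of v] h] .
  then have "bounded_linear (\<lambda>x::real^'a. x - (2 / (v \<bullet> v) * (x \<bullet> v)) *\<^sub>R v)"
    by (intro bounded_linear_sub bounded_linear_ident)
  moreover have "refl v = (\<lambda>x. x - (2 / (v \<bullet> v) * (x \<bullet> v)) *\<^sub>R v)"
    by (auto simp: refl_def)
  ultimately show ?thesis by simp
qed

lemma poly_dq:
  "real_polynomial_function (f::real^'n::finite \<Rightarrow> real) \<Longrightarrow>
   \<exists>q. real_polynomial_function q \<and> (\<forall>x. f x - f (refl v x) = (x \<bullet> v) * q x)"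
proof (induction f rule: real_polynomial_function.induct)
  case (linear f)
  have "f x - f (refl v x) = (x \<bullet> v) * (2 / (v \<bullet> v) * f v)" for x
  proof -
    have "f x - f (refl v x) = f (x - refl v x)" using linear
      by (simp add: linear_diff bounded_linear.linear)
    also have "\<dots> = (2 / (v \<bullet> v)) * (x \<bullet> v) * f v"
      using linear by (simp add: refl_diff linear_scale bounded_linear.linear)
    finally show ?thesis by simp
  qed
  then show ?case by (rule_tac x="\<lambda>x. 2 / (v \<bullet> v) * f v" in exI) auto
next
  case (const c)
  then show ?case by (rule_tac x="\<lambda>x. 0" in exI) auto
next
  case (add f g)
  then obtain p q where hp: "RPF p" "\<forall>x. f x - f (refl v x) = (x \<bullet> v) * p x"
     and hq: "RPF q" "\<forall>x. g x - g (refl v x) = (x \<bullet> v) * q x" by blast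
  have "f x + g x - (f (refl v x) + g (refl v x)) = (x \<bullet> v) * (p x + q x)" for x
    using hp(2)[rule_format, of x] hq(2)[rule_format, of x] by (simp add: distrib_left)
  then show ?case using hp(1) hq(1)
    by (rule_tac x="\<lambda>x. p x + q x" in exI) (simp add: real_polynomial_function.intros(3))
next
  case (mult f g)
  then obtain p q where p: "RPF p" "\<forall>x. f x - f (refl v x) = (x \<bullet> v) * p x"
     and q: "RPF q" "\<forall>x. g x - g (refl v x) = (x \<bullet> v) * q x" by blast
  have gL: "RPF (\<lambda>x. g (refl v x))"
    using real_polynomial_function_compose[OF polynomial_function_bounded_linear[OF bl_refl] mult(2)]
    by (simp add: o_def)
  have "f x * g x - f (refl v x) * g (refl v x) = (x \<bullet> v) * (f x * q x + g (refl v x) * p x)" for x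
  proof -
    have "f x * g x - f (refl v x) * g (refl v x) = f x * (g x - g (refl v x)) + g (refl v x) * (f x - f (refl v x))"
      by (simp add: right_diff_distrib)
    also have "\<dots> = f x * ((x \<bullet> v) * q x) + g (refl v x) * ((x \<bullet> v) * p x)"
      by (simp only: p(2)[rule_format] q(2)[rule_format])
    also have "\<dots> = (x \<bullet> v) * (f x * q x + g (refl v x) * p x)"
      by (simp add: algebra_simps)
    finally show ?thesis .
  qed
  then have eq: "\<forall>x. f x * g x - f (refl v x) * g (refl v x) = (x \<bullet> v) * (f x * q x + g (refl v x) * p x)" by blast
  have "RPF (\<lambda>x. f x * q x + g (refl v x) * p x)"
    using p(1) q(1) gL mult.hyps by (intro real_polynomial_function.intros(3,4))
  then show ?case using eq by blast
qed

lemma islimpt_hyp: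
  fixes v :: "real^'n::finite"
  assumes "v \<noteq> 0"
  shows "x islimpt {y. y \<bullet> v \<noteq> 0}"
unfolding islimpt_approachable
proof (intro allI impI)
  fix e :: real assume e: "e > 0"
  define t where "t = e / (2 * norm v)"
  have nv: "norm v > 0" using assms by simp
  have t: "t > 0" using e nv by (simp add: t_def)
  have "(x + t *\<^sub>R v) \<bullet> v \<noteq> 0 \<or> (x - t *\<^sub>R v) \<bullet> v \<noteq> 0"
  proof (rule ccontr)
    assume "\<not> ?thesis"
    then have "(x + t *\<^sub>R v) \<bullet> v - (x - t *\<^sub>R v) \<bullet> v = 0" by simp
    then have "2 * t * (v \<bullet> v) = 0" by (simp add: algebra_simps inner_diff_left inner_add_left)
    then show False using t assms by simp
  qed
  moreover have "dist (x + t *\<^sub>R v) x < e" "dist (x - t *\<^sub>R v) x < e"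
    "x + t *\<^sub>R v \<noteq> x" "x - t *\<^sub>R v \<noteq> x"
    using t nv e assms by (auto simp: dist_norm t_def)
  ultimately show "\<exists>y\<in>{y. y \<bullet> v \<noteq> 0}. y \<noteq> x \<and> dist y x < e" by blast
qed

lemma divdiff_eq:
  fixes v :: "real^'n::finite"
  assumes "v \<noteq> 0" "\<And>x. continuous (at x) q"
    and "\<And>x. x \<bullet> v \<noteq> 0 \<Longrightarrow> (f x - f (refl v x)) / (x \<bullet> v) = q x"
  shows "divdiff v f = q"
proof
  fix x
  show "divdiff v f x = q x"
  proof (cases "x \<bullet> v = 0")
    case False then show ?thesis using assms by (simp add: divdiff_def)
  next
    case True
    have "continuous (at x within {y. y \<bullet> v \<noteq> 0}) q"
      using assms(2) continuous_at_imp_continuous_within by blast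
    then have "(q \<longlongrightarrow> q x) (at x within {y. y \<bullet> v \<noteq> 0})"
      by (simp add: continuous_within)
    moreover have "eventually (\<lambda>y. q y = (f y - f (refl v y)) / (y \<bullet> v)) (at x within {y. y \<bullet> v \<noteq> 0})"
      unfolding eventually_at_filter by (rule always_eventually) (auto simp: assms(3))
    ultimately have "((\<lambda>y. (f y - f (refl v y)) / (y \<bullet> v)) \<longlongrightarrow> q x) (at x within {y. y \<bullet> v \<noteq> 0})"
      by (rule Lim_transform_eventually)
    then show ?thesis using True islimpt_hyp[OF assms(1)]
      by (simp add: divdiff_def tendsto_Lim trivial_limit_within)
  qed
qed

lemma half_sum:
  fixes G :: "'n::{finite,linorder} \<Rightarrow> 'n \<Rightarrow> real"
  assumes sym: "\<And>i j. G i j = G j i" and dg: "\<And>i. G i i = 0"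
  shows "(\<Sum>(i,j)\<in>{(i,j). i<j}. G i j) = (\<Sum>i\<in>UNIV. \<Sum>j\<in>UNIV. G i j) / 2"
proof -
  let ?S1 = "{(i::'n,j). i<j}" and ?S2 = "{(i::'n,j). j<i}" and ?S3 = "{(i::'n,j). i=j}"
  have U: "(UNIV :: ('n\<times>'n) set) = ?S1 \<union> ?S2 \<union> ?S3" by auto
  have "(\<Sum>i\<in>UNIV. \<Sum>j\<in>UNIV. G i j) = (\<Sum>p\<in>UNIV. case_prod G p)"
    by (simp add: sum.cartesian_product)
  also have "\<dots> = (\<Sum>p\<in>?S1 \<union> ?S2 \<union> ?S3. case_prod G p)" using U by simp
  also have "\<dots> = (\<Sum>p\<in>?S1. case_prod G p) + (\<Sum>p\<in>?S2. case_prod G p) + (\<Sum>p\<in>?S3. case_prod G p)"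
    by (subst sum.union_disjoint, simp, simp, force)+ auto
  also have "(\<Sum>p\<in>?S3. case_prod G p) = 0" by (rule sum.neutral) (auto simp: dg)
  also have "?S2 = prod.swap ` ?S1" by auto
  also have "(\<Sum>p\<in>prod.swap ` ?S1. case_prod G p) = (\<Sum>p\<in>?S1. case_prod G p)"
    by (subst sum.reindex) (auto simp: sym intro!: sum.cong)
  finally show ?thesis by simp
qed

lemma alg:
  fixes x :: "(real, 'n::{finite,linorder}) vec" and d :: "'n \<Rightarrow> real" and dd :: "'n \<Rightarrow> 'n \<Rightarrow> real"
    and s :: "(real, 'n) vec \<Rightarrow> 'n \<Rightarrow> real" and k :: "(real, 'n) vec \<Rightarrow> real" and V :: "((real, 'n) vec) set"
  assumes fin: "finite V" and nz: "\<forall>v\<in>V. v \<noteq> 0"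
  shows "(\<Sum>(i,j)\<in>{(i,j). i<j}.
      x$i * (x$i * dd j j + (if j = i then d j else 0) + (\<Sum>v\<in>V. k v * (2 / (v \<bullet> v)) * v$i * v$j * s v j)
            - (x$j * dd j i + d i + (\<Sum>v\<in>V. k v * (2 / (v \<bullet> v)) * v$j * v$j * s v i)))
    - x$j * (x$i * dd i j + d j + (\<Sum>v\<in>V. k v * (2 / (v \<bullet> v)) * v$i * v$i * s v j)
            - (x$j * dd i i + (if i = j then d i else 0) + (\<Sum>v\<in>V. k v * (2 / (v \<bullet> v)) * v$j * v$i * s v i))))
   = (x \<bullet> x) * (\<Sum>i\<in>UNIV. dd i i)
     - (\<Sum>i\<in>UNIV. x$i * (\<Sum>j\<in>UNIV. x$j * dd i j + (if i = j then d j else 0) + (\<Sum>v\<in>V. k v * (2 / (v \<bullet> v)) * v$j * v$i * s v j)))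
     - (real CARD('n) - 2) * (\<Sum>i\<in>UNIV. x$i * d i)
     - 2 * (\<Sum>v\<in>V. k v * (\<Sum>i\<in>UNIV. (refl v x)$i * s v i))"
proof -
  define c where "c v = 2 / (v \<bullet> v)" for v :: "(real, 'n) vec"
  define L where "L = (\<Sum>i\<in>UNIV. dd i i)"
  define M where "M = (\<Sum>i\<in>UNIV. \<Sum>j\<in>UNIV. x$i * x$j * dd i j)"
  define E1 where "E1 = (\<Sum>i\<in>UNIV. x$i * d i)"
  define A where "A = (\<Sum>v\<in>V. k v * c v * (x \<bullet> v) * (\<Sum>j\<in>UNIV. v$j * s v j))"
  define B where "B v = (\<Sum>i\<in>UNIV. x$i * s v i)" for v
  define N where "N = real CARD('n)"
  have xx: "x \<bullet> x = (\<Sum>i\<in>UNIV. x$i * x$i)" by (simp add: inner_vec_def)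
  have xv: "x \<bullet> v = (\<Sum>i\<in>UNIV. x$i * v$i)" for v by (simp add: inner_vec_def)
  have vv: "v \<bullet> v = (\<Sum>i\<in>UNIV. v$i * v$i)" for v :: "(real, 'n) vec" by (simp add: inner_vec_def)
  have cvv: "c v * (\<Sum>i\<in>UNIV. v$i * v$i) = 2" if "v \<in> V" for v
    using nz that by (simp add: c_def vv[symmetric])
  define t1 where "t1 i j = x$i * (x$i * dd j j)" for i j
  define t2 where "t2 i j = x$i * (if j = i then d j else 0)" for i j
  define t3 where "t3 i j = x$i * (\<Sum>v\<in>V. k v * c v * v$i * v$j * s v j)" for i j
  define t4 where "t4 i j = x$i * (x$j * dd j i)" for i j
  define t5 where "t5 i j = x$i * d i" for i j :: 'n
  define t6 where "t6 i j = x$i * (\<Sum>v\<in>V. k v * c v * v$j * v$j * s v i)" for i j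
  define t7 where "t7 i j = x$j * (x$i * dd i j)" for i j
  define t8 where "t8 i j = x$j * d j" for i j :: 'n
  define t9 where "t9 i j = x$j * (\<Sum>v\<in>V. k v * c v * v$i * v$i * s v j)" for i j
  define t10 where "t10 i j = x$j * (x$j * dd i i)" for i j
  define t11 where "t11 i j = x$j * (if i = j then d i else 0)" for i j
  define t12 where "t12 i j = x$j * (\<Sum>v\<in>V. k v * c v * v$j * v$i * s v i)" for i j
  define G where "G i j = t1 i j + t2 i j + t3 i j - t4 i j - t5 i j - t6 i j - t7 i j - t8 i j - t9 i j
     + t10 i j + t11 i j + t12 i j" for i j
  have LHS: "(\<Sum>(i,j)\<in>{(i,j). i<j}.
      x$i * (x$i * dd j j + (if j = i then d j else 0) + (\<Sum>v\<in>V. k v * (2 / (v \<bullet> v)) * v$i * v$j * s v j)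
            - (x$j * dd j i + d i + (\<Sum>v\<in>V. k v * (2 / (v \<bullet> v)) * v$j * v$j * s v i)))
    - x$j * (x$i * dd i j + d j + (\<Sum>v\<in>V. k v * (2 / (v \<bullet> v)) * v$i * v$i * s v j)
            - (x$j * dd i i + (if i = j then d i else 0) + (\<Sum>v\<in>V. k v * (2 / (v \<bullet> v)) * v$j * v$i * s v i))))
    = (\<Sum>(i,j)\<in>{(i,j). i<j}. G i j)"
    by (rule sum.cong) (auto simp: G_def t1_def t2_def t3_def t4_def t5_def t6_def t7_def t8_def t9_def
          t10_def t11_def t12_def c_def algebra_simps)
  have Gsym: "G i j = G j i" for i j
    by (simp add: G_def t1_def t2_def t3_def t4_def t5_def t6_def t7_def t8_def t9_def
          t10_def t11_def t12_def algebra_simps)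
  have Gd: "G i i = 0" for i
    by (simp add: G_def t1_def t2_def t3_def t4_def t5_def t6_def t7_def t8_def t9_def
          t10_def t11_def t12_def algebra_simps)
  have S: "(\<Sum>i\<in>UNIV. \<Sum>j\<in>UNIV. G i j) =
     (\<Sum>i\<in>UNIV. \<Sum>j\<in>UNIV. t1 i j) + (\<Sum>i\<in>UNIV. \<Sum>j\<in>UNIV. t2 i j) + (\<Sum>i\<in>UNIV. \<Sum>j\<in>UNIV. t3 i j)
     - (\<Sum>i\<in>UNIV. \<Sum>j\<in>UNIV. t4 i j) - (\<Sum>i\<in>UNIV. \<Sum>j\<in>UNIV. t5 i j) - (\<Sum>i\<in>UNIV. \<Sum>j\<in>UNIV. t6 i j)
     - (\<Sum>i\<in>UNIV. \<Sum>j\<in>UNIV. t7 i j) - (\<Sum>i\<in>UNIV. \<Sum>j\<in>UNIV. t8 i j) - (\<Sum>i\<in>UNIV. \<Sum>j\<in>UNIV. t9 i j)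
     + (\<Sum>i\<in>UNIV. \<Sum>j\<in>UNIV. t10 i j) + (\<Sum>i\<in>UNIV. \<Sum>j\<in>UNIV. t11 i j) + (\<Sum>i\<in>UNIV. \<Sum>j\<in>UNIV. t12 i j)"
    unfolding G_def by (simp only: sum.distrib sum_subtractf)
  have T1: "(\<Sum>i\<in>UNIV. \<Sum>j\<in>UNIV. t1 i j) = (x \<bullet> x) * L"
    by (simp add: t1_def xx L_def sum_distrib_left sum_distrib_right mult_ac)
  have T10: "(\<Sum>i\<in>UNIV. \<Sum>j\<in>UNIV. t10 i j) = (x \<bullet> x) * L"
    by (subst sum.swap) (simp add: t10_def xx L_def sum_distrib_left sum_distrib_right mult_ac)
  have T2: "(\<Sum>i\<in>UNIV. \<Sum>j\<in>UNIV. t2 i j) = E1"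
    by (simp add: t2_def E1_def if_distrib cong: if_cong)
  have T11: "(\<Sum>i\<in>UNIV. \<Sum>j\<in>UNIV. t11 i j) = E1"
    by (simp add: t11_def E1_def if_distrib cong: if_cong)
  have T5: "(\<Sum>i\<in>UNIV. \<Sum>j\<in>UNIV. t5 i j) = N * E1"
    by (simp add: t5_def E1_def N_def sum_distrib_left)
  have T8: "(\<Sum>i\<in>UNIV. \<Sum>j\<in>UNIV. t8 i j) = N * E1"
    by (subst sum.swap) (simp add: t8_def E1_def N_def sum_distrib_left)
  have T4: "(\<Sum>i\<in>UNIV. \<Sum>j\<in>UNIV. t4 i j) = M"
    by (subst sum.swap) (simp add: t4_def M_def mult_ac)
  have T7: "(\<Sum>i\<in>UNIV. \<Sum>j\<in>UNIV. t7 i j) = M"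
    by (simp add: t7_def M_def mult_ac)
  have T3: "(\<Sum>i\<in>UNIV. \<Sum>j\<in>UNIV. t3 i j) = A"
  proof -
    have "(\<Sum>i\<in>UNIV. \<Sum>j\<in>UNIV. t3 i j) = (\<Sum>i\<in>UNIV. \<Sum>j\<in>UNIV. \<Sum>v\<in>V. k v * c v * (x$i * v$i) * (v$j * s v j))"
      by (simp add: t3_def sum_distrib_left mult_ac)
    also have "\<dots> = (\<Sum>v\<in>V. \<Sum>i\<in>UNIV. \<Sum>j\<in>UNIV. k v * c v * (x$i * v$i) * (v$j * s v j))"
      by (simp add: sum.swap[of _ V])
    also have "\<dots> = A"
      by (simp add: A_def xv sum_distrib_left sum_distrib_right mult_ac)
    finally show ?thesis .
  qed
  have T12: "(\<Sum>i\<in>UNIV. \<Sum>j\<in>UNIV. t12 i j) = A"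
  proof -
    have "(\<Sum>i\<in>UNIV. \<Sum>j\<in>UNIV. t12 i j) = (\<Sum>j\<in>UNIV. \<Sum>i\<in>UNIV. \<Sum>v\<in>V. k v * c v * (x$j * v$j) * (v$i * s v i))"
      by (subst sum.swap) (simp add: t12_def sum_distrib_left mult_ac)
    also have "\<dots> = (\<Sum>v\<in>V. \<Sum>j\<in>UNIV. \<Sum>i\<in>UNIV. k v * c v * (x$j * v$j) * (v$i * s v i))"
      by (simp add: sum.swap[of _ V])
    also have "\<dots> = A"
      by (simp add: A_def xv sum_distrib_left sum_distrib_right mult_ac)
    finally show ?thesis .
  qed
  have T6: "(\<Sum>i\<in>UNIV. \<Sum>j\<in>UNIV. t6 i j) = 2 * (\<Sum>v\<in>V. k v * B v)"
  proof -
    have "(\<Sum>i\<in>UNIV. \<Sum>j\<in>UNIV. t6 i j) = (\<Sum>i\<in>UNIV. \<Sum>j\<in>UNIV. \<Sum>v\<in>V. k v * c v * (v$j * v$j) * (x$i * s v i))"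
      by (simp add: t6_def sum_distrib_left mult_ac)
    also have "\<dots> = (\<Sum>v\<in>V. \<Sum>i\<in>UNIV. \<Sum>j\<in>UNIV. k v * c v * (v$j * v$j) * (x$i * s v i))"
      by (simp add: sum.swap[of _ V])
    also have "\<dots> = (\<Sum>v\<in>V. k v * (c v * (\<Sum>j\<in>UNIV. v$j * v$j)) * B v)"
      by (rule sum.cong, simp, subst sum.swap, simp add: B_def sum_distrib_left sum_distrib_right mult_ac)
    also have "\<dots> = (\<Sum>v\<in>V. 2 * (k v * B v))"
      by (rule sum.cong) (auto simp: cvv)
    finally show ?thesis by (simp add: sum_distrib_left)
  qed
  have T9: "(\<Sum>i\<in>UNIV. \<Sum>j\<in>UNIV. t9 i j) = 2 * (\<Sum>v\<in>V. k v * B v)"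
  proof -
    have "(\<Sum>i\<in>UNIV. \<Sum>j\<in>UNIV. t9 i j) = (\<Sum>j\<in>UNIV. \<Sum>i\<in>UNIV. \<Sum>v\<in>V. k v * c v * (v$i * v$i) * (x$j * s v j))"
      by (subst sum.swap) (simp add: t9_def sum_distrib_left mult_ac)
    also have "\<dots> = (\<Sum>v\<in>V. \<Sum>j\<in>UNIV. \<Sum>i\<in>UNIV. k v * c v * (v$i * v$i) * (x$j * s v j))"
      by (simp add: sum.swap[of _ V])
    also have "\<dots> = (\<Sum>v\<in>V. k v * (c v * (\<Sum>j\<in>UNIV. v$j * v$j)) * B v)"
      by (rule sum.cong, simp, subst sum.swap, simp add: B_def sum_distrib_left sum_distrib_right mult_ac)
    also have "\<dots> = (\<Sum>v\<in>V. 2 * (k v * B v))"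
      by (rule sum.cong) (auto simp: cvv)
    finally show ?thesis by (simp add: sum_distrib_left)
  qed
  have L1: "(\<Sum>(i,j)\<in>{(i,j). i<j}. G i j) = (x \<bullet> x) * L - M - (N - 1) * E1 + A - 2 * (\<Sum>v\<in>V. k v * B v)"
    unfolding half_sum[of G, OF Gsym Gd] S T1 T2 T3 T4 T5 T6 T7 T8 T9 T10 T11 T12
    by (simp add: field_simps)
  have hd: "(\<Sum>j\<in>UNIV. x$i * (if i = j then d j else 0)) = x$i * d i" for i
    by (simp add: sum_distrib_left[symmetric])
  have hd2: "(\<Sum>j\<in>UNIV. x$i * (if j = i then d j else 0)) = x$i * d i" for i
    by (simp add: sum_distrib_left[symmetric])
  have E2: "(\<Sum>i\<in>UNIV. x$i * (\<Sum>j\<in>UNIV. x$j * dd i j + (if i = j then d j else 0) + (\<Sum>v\<in>V. k v * (2 / (v \<bullet> v)) * v$j * v$i * s v j)))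
     = M + E1 + A"
  proof -
    have "(\<Sum>i\<in>UNIV. x$i * (\<Sum>j\<in>UNIV. x$j * dd i j + (if i = j then d j else 0) + (\<Sum>v\<in>V. k v * (2 / (v \<bullet> v)) * v$j * v$i * s v j)))
      = (\<Sum>i\<in>UNIV. \<Sum>j\<in>UNIV. x$i * x$j * dd i j) + (\<Sum>i\<in>UNIV. \<Sum>j\<in>UNIV. t2 i j) + (\<Sum>i\<in>UNIV. \<Sum>j\<in>UNIV. t3 i j)"
      using hd hd2 by (simp add: sum_distrib_left sum.distrib t2_def t3_def c_def algebra_simps)
    then show ?thesis unfolding T2 T3 M_def .
  qed
  have R: "(\<Sum>v\<in>V. k v * (\<Sum>i\<in>UNIV. (refl v x)$i * s v i)) = (\<Sum>v\<in>V. k v * B v) - A"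
  proof -
    have "(\<Sum>i\<in>UNIV. (refl v x)$i * s v i) = B v - c v * (x \<bullet> v) * (\<Sum>j\<in>UNIV. v$j * s v j)" for v
      by (simp add: refl_def B_def c_def algebra_simps sum_subtractf sum_distrib_left sum_divide_distrib)
    then have "(\<Sum>v\<in>V. k v * (\<Sum>i\<in>UNIV. (refl v x)$i * s v i)) =
        (\<Sum>v\<in>V. k v * B v - k v * c v * (x \<bullet> v) * (\<Sum>j\<in>UNIV. v$j * s v j))"
      by (simp add: right_diff_distrib mult.assoc)
    then show ?thesis
      by (simp add: A_def sum_subtractf)
  qed
  show ?thesis
    unfolding LHS L1 E2 R L_def[symmetric] N_def[symmetric] E1_def[symmetric] by (simp add: algebra_simps)
qed

lemma RPF_refl: "RPF g \<Longrightarrow> RPF (\<lambda>x. g (refl v x))"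
  using real_polynomial_function_compose[OF polynomial_function_bounded_linear[OF bl_refl]]
  by (simp add: o_def)

lemma RPF_nth: "RPF (\<lambda>x::real^'n::finite. x$j)"
  by (rule real_polynomial_function.intros(1)) (rule bounded_linear_vec_nth)

lemma divdiff_poly:
  fixes v :: "real^'n::finite"
  assumes "v \<noteq> 0" "RPF f"
  shows "RPF (divdiff v f)"
proof -
  obtain q where q: "RPF q" "\<forall>x. f x - f (refl v x) = (x \<bullet> v) * q x"
    using poly_dq[OF assms(2)] by blast
  have "divdiff v f = q"
    by (rule divdiff_eq) (use assms q in \<open>auto simp: continuous_real_polymonial_function\<close>)
  then show ?thesis using q by simp
qed

lemma divdiff_off: "x \<bullet> v \<noteq> 0 \<Longrightarrow> divdiff v f x = (f x - f (refl v x)) / (x \<bullet> v)"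
  by (simp add: divdiff_def)

lemma partial_eq: "(\<And>x. (f has_derivative f' x) (at x)) \<Longrightarrow> partial i f x = f' x (axis i 1)"
  using frechet_derivative_at by (metis partial_def)

lemma partial_poly: "RPF (f::real^'n::finite \<Rightarrow> real) \<Longrightarrow> RPF (partial i f)"
proof -
  assume "RPF f"
  then obtain f' where "\<forall>x. (f has_derivative f' x) (at x)" "\<forall>h. RPF (\<lambda>x. f' x h)"
    using poly_deriv by blast
  moreover then have "partial i f = (\<lambda>x. f' x (axis i 1))"
    using partial_eq by blast
  ultimately show ?thesis by simp
qed

lemma dunkl_poly:
  assumes nz: "\<forall>v\<in>pos_roots R u0. v \<noteq> 0" and fin: "finite (pos_roots R u0)" and f: "RPF f"
  shows "RPF (dunkl R u0 \<kappa> i f)"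
  unfolding dunkl_def
  by (intro real_polynomial_function.intros(3) partial_poly f real_polynomial_function_sum fin ballI
      real_polynomial_function.intros(4) real_polynomial_function.intros(2) divdiff_poly) (use nz in auto)

lemma dunkl_diff:
  assumes nz: "\<forall>v\<in>pos_roots R u0. v \<noteq> 0" and f: "RPF f" and g: "RPF g"
  shows "dunkl R u0 \<kappa> i (\<lambda>y. f y - g y) x = dunkl R u0 \<kappa> i f x - dunkl R u0 \<kappa> i g x"
proof -
  obtain f' where f': "\<forall>x. (f has_derivative f' x) (at x)" using poly_deriv[OF f] by blast
  obtain g' where g': "\<forall>x. (g has_derivative g' x) (at x)" using poly_deriv[OF g] by blast
  have p: "partial i (\<lambda>y. f y - g y) x = partial i f x - partial i g x"
    using partial_eq[of f f'] partial_eq[of g g'] partial_eq[of "\<lambda>y. f y - g y" "\<lambda>x h. f' x h - g' x h"]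
      f' g' by (simp add: has_derivative_diff)
  have d: "divdiff v (\<lambda>y. f y - g y) = (\<lambda>x. divdiff v f x - divdiff v g x)" if "v \<in> pos_roots R u0" for v
  proof (rule divdiff_eq)
    show "v \<noteq> 0" using nz that by auto
    then show "continuous (at x) (\<lambda>x. divdiff v f x - divdiff v g x)" for x
      using divdiff_poly f g by (intro continuous_diff continuous_real_polymonial_function) auto
    show "(f x - g x - (f (refl v x) - g (refl v x))) / (x \<bullet> v) = divdiff v f x - divdiff v g x"
      if "x \<bullet> v \<noteq> 0" for x
      using that by (simp add: divdiff_off diff_divide_distrib)
  qed
  show ?thesis unfolding dunkl_def p
    by (simp add: d sum_subtractf algebra_simps cong: sum.cong)
qed

lemma dunkl_sum:
  assumes nz: "\<forall>v\<in>pos_roots R u0. v \<noteq> 0" and I: "finite I" and h: "\<forall>j\<in>I. RPF (h j)"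
  shows "dunkl R u0 \<kappa> i (\<lambda>y. \<Sum>j\<in>I. h j y) x = (\<Sum>j\<in>I. dunkl R u0 \<kappa> i (h j) x)"
proof -
  have "\<forall>j\<in>I. \<exists>h'. \<forall>x. (h j has_derivative h' x) (at x)" using poly_deriv h by blast
  then obtain h' where h': "\<forall>j\<in>I. \<forall>x. (h j has_derivative h' j x) (at x)" by metis
  have p: "partial i (\<lambda>y. \<Sum>j\<in>I. h j y) x = (\<Sum>j\<in>I. partial i (h j) x)"
  proof -
    have "partial i (\<lambda>y. \<Sum>j\<in>I. h j y) x = (\<Sum>j\<in>I. h' j x (axis i 1))"
      by (rule partial_eq[of _ "\<lambda>x h. \<Sum>j\<in>I. h' j x h"]) (use h' in \<open>auto intro!: has_derivative_sum\<close>)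
    also have "\<dots> = (\<Sum>j\<in>I. partial i (h j) x)"
      by (intro sum.cong refl) (metis h' partial_eq)
    finally show ?thesis .
  qed
  have d: "divdiff v (\<lambda>y. \<Sum>j\<in>I. h j y) = (\<lambda>x. \<Sum>j\<in>I. divdiff v (h j) x)" if "v \<in> pos_roots R u0" for v
  proof (rule divdiff_eq)
    show "v \<noteq> 0" using nz that by auto
    then show "continuous (at x) (\<lambda>x. \<Sum>j\<in>I. divdiff v (h j) x)" for x
      using divdiff_poly h I by (intro continuous_real_polymonial_function real_polynomial_function_sum) auto
    show "((\<Sum>j\<in>I. h j x) - (\<Sum>j\<in>I. h j (refl v x))) / (x \<bullet> v) = (\<Sum>j\<in>I. divdiff v (h j) x)"
      if "x \<bullet> v \<noteq> 0" for x
      using that by (simp add: divdiff_off sum_divide_distrib[symmetric] sum_subtractf)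
  qed
  show ?thesis unfolding dunkl_def p
    by (simp add: d sum.distrib sum_distrib_left sum_distrib_right sum.swap[of _ I] cong: sum.cong)
qed

lemma dunkl_coord:
  assumes nz: "\<forall>v\<in>pos_roots R u0. v \<noteq> 0" and g: "RPF g"
  shows "dunkl R u0 \<kappa> i (\<lambda>y. y$j * g y) x = x$j * dunkl R u0 \<kappa> i g x + (if i = j then g x else 0)
     + (\<Sum>v\<in>pos_roots R u0. \<kappa> v * (2 / (v \<bullet> v)) * v$j * v$i * g (refl v x))"
proof -
  obtain g' where g': "\<forall>x. (g has_derivative g' x) (at x)" using poly_deriv[OF g] by blast
  have nth: "((\<lambda>y. y$j) has_derivative (\<lambda>h. h$j)) (at x)" for x :: "real^'a"
    by (rule bounded_linear_imp_has_derivative) (rule bounded_linear_vec_nth)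
  have d1: "((\<lambda>y. y$j * g y) has_derivative (\<lambda>h. x$j * g' x h + h$j * g x)) (at x)" for x
    using has_derivative_mult[OF nth g'[rule_format]] by simp
  have "partial i (\<lambda>y. y$j * g y) x = x$j * g' x (axis i 1) + (axis i 1)$j * g x"
    using partial_eq[of "\<lambda>y. y$j * g y" "\<lambda>x h. x$j * g' x h + h$j * g x" i x] d1 by simp
  moreover have "partial i g x = g' x (axis i 1)" using partial_eq g' by blast
  ultimately have p: "partial i (\<lambda>y. y$j * g y) x = x$j * partial i g x + (if i = j then g x else 0)"
    by (auto simp: axis_def)
  have d: "divdiff v (\<lambda>y. y$j * g y) = (\<lambda>x. x$j * divdiff v g x + 2 / (v \<bullet> v) * v$j * g (refl v x))"
    if "v \<in> pos_roots R u0" for v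
  proof (rule divdiff_eq)
    show v0: "v \<noteq> 0" using nz that by auto
    have r1: "RPF (divdiff v g)" using divdiff_poly[OF v0 g] .
    have r2: "RPF (\<lambda>x. g (refl v x))" using RPF_refl[OF g] .
    have "RPF (\<lambda>x. x$j * divdiff v g x + (2 / (v \<bullet> v) * v$j) * g (refl v x))"
      by (rule real_polynomial_function.intros(3), rule real_polynomial_function.intros(4)[OF RPF_nth r1],
          rule real_polynomial_function.intros(4)[OF real_polynomial_function.intros(2) r2])
    then show "continuous (at x) (\<lambda>x. x$j * divdiff v g x + 2 / (v \<bullet> v) * v$j * g (refl v x))" for x
      using continuous_real_polymonial_function by (simp add: mult.assoc)
    show "(x$j * g x - (refl v x)$j * g (refl v x)) / (x \<bullet> v) = x$j * divdiff v g x + 2 / (v \<bullet> v) * v$j * g (refl v x)"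
      if xv: "x \<bullet> v \<noteq> 0" for x
    proof -
      have "x$j * g x - (refl v x)$j * g (refl v x) = x$j * (g x - g (refl v x)) + (x \<bullet> v) * (2 / (v \<bullet> v) * v$j * g (refl v x))"
        by (simp add: refl_def algebra_simps)
      then have "(x$j * g x - (refl v x)$j * g (refl v x)) / (x \<bullet> v) = x$j * ((g x - g (refl v x)) / (x \<bullet> v)) + 2 / (v \<bullet> v) * v$j * g (refl v x)"
        using xv by (simp add: add_divide_distrib)
      then show ?thesis using xv by (simp add: divdiff_off)
    qed
  qed
  have "dunkl R u0 \<kappa> i (\<lambda>y. y$j * g y) x = x$j * partial i g x + (if i = j then g x else 0)
     + (\<Sum>v\<in>pos_roots R u0. \<kappa> v * (x$j * divdiff v g x + 2 / (v \<bullet> v) * v$j * g (refl v x)) * v$i)"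
    unfolding dunkl_def p by (simp add: d cong: sum.cong)
  also have "(\<Sum>v\<in>pos_roots R u0. \<kappa> v * (x$j * divdiff v g x + 2 / (v \<bullet> v) * v$j * g (refl v x)) * v$i)
     = x$j * (\<Sum>v\<in>pos_roots R u0. \<kappa> v * divdiff v g x * v$i)
       + (\<Sum>v\<in>pos_roots R u0. \<kappa> v * (2 / (v \<bullet> v)) * v$j * v$i * g (refl v x))"
    by (simp add: sum_distrib_left sum.distrib[symmetric] algebra_simps)
  finally show ?thesis unfolding dunkl_def by (simp add: algebra_simps)
qed

lemma Jop_axis: "Jop R u0 \<kappa> (axis i 1) (axis j 1) g x = x$i * dunkl R u0 \<kappa> j g x - x$j * dunkl R u0 \<kappa> i g x"
proof -
  have "dir_dunkl R u0 \<kappa> (axis k 1) g x = dunkl R u0 \<kappa> k g x" for k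
  proof -
    have "(\<Sum>i\<in>UNIV. (axis k 1)$i * dunkl R u0 \<kappa> i g x) = (\<Sum>i\<in>UNIV. if i = k then dunkl R u0 \<kappa> i g x else 0)"
      by (intro sum.cong) (auto simp: axis_def)
    then show ?thesis unfolding dir_dunkl_def by simp
  qed
  then show ?thesis unfolding Jop_def by (simp add: inner_axis')
qed

theorem mainTheorem12:
  fixes R :: "((real, 'n::{finite,linorder}) vec) set" and u0 :: "(real, 'n) vec"
    and \<kappa> :: "(real, 'n) vec \<Rightarrow> real" and f :: "(real, 'n) vec \<Rightarrow> real"
  assumes "root_system R"
    and "\<forall>v\<in>R. u0 \<bullet> v \<noteq> 0"
    and "\<forall>u\<in>R. \<forall>v\<in>R. \<kappa> (refl v u) = \<kappa> u"
    and "polynomial_function f"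
  shows "Jcal R u0 \<kappa> f =
    (\<lambda>x. (x \<bullet> x) * dunkl_laplacian R u0 \<kappa> f x
       - euler_dunkl R u0 \<kappa> (euler_dunkl R u0 \<kappa> f) x
       - (real CARD('n) - 2) * euler_dunkl R u0 \<kappa> f x
       - 2 * (\<Sum>v\<in>pos_roots R u0. \<kappa> v * euler_dunkl R u0 \<kappa> f (refl v x)))"
proof
  fix x :: "(real, 'n) vec"
  define P where "P = pos_roots R u0"
  define D where "D = dunkl R u0 \<kappa>"
  have fin: "finite P" using assms(1) by (simp add: P_def pos_roots_def root_system_def)
  have nz: "\<forall>v\<in>pos_roots R u0. v \<noteq> 0" using assms(1) by (auto simp: pos_roots_def root_system_def)
  have F: "RPF f" using assms(4) by (simp add: real_polynomial_function_eq)
  have Dp: "RPF (D i g)" if "RPF g" for i g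
    unfolding D_def using dunkl_poly[OF nz fin[unfolded P_def] that] .
  have Cp: "RPF (\<lambda>y. y$i * D j f y)" for i j
    by (rule real_polynomial_function.intros(4)[OF RPF_nth Dp[OF F]])
  have Jf: "Jop R u0 \<kappa> (axis i 1) (axis j 1) f = (\<lambda>y. y$i * D j f y - y$j * D i f y)" for i j
    by (rule ext) (simp add: Jop_axis D_def)
  have DJ: "D k (\<lambda>y. y$i * D j f y - y$j * D i f y) x = D k (\<lambda>y. y$i * D j f y) x - D k (\<lambda>y. y$j * D i f y) x"
    for i j k unfolding D_def by (rule dunkl_diff[OF nz Cp[unfolded D_def] Cp[unfolded D_def]])
  have CO: "D i (\<lambda>y. y$j * g y) x = x$j * D i g x + (if i = j then g x else 0)
     + (\<Sum>v\<in>P. \<kappa> v * (2 / (v \<bullet> v)) * v$j * v$i * g (refl v x))" if "RPF g" for i j g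
    unfolding D_def P_def by (rule dunkl_coord[OF nz that])
  have LHS: "Jcal R u0 \<kappa> f x = (\<Sum>(i,j)\<in>{(i,j). i<j}.
      x$i * (x$i * D j (D j f) x + (if j = i then D j f x else 0) + (\<Sum>v\<in>P. \<kappa> v * (2 / (v \<bullet> v)) * v$i * v$j * D j f (refl v x))
            - (x$j * D j (D i f) x + D i f x + (\<Sum>v\<in>P. \<kappa> v * (2 / (v \<bullet> v)) * v$j * v$j * D i f (refl v x))))
    - x$j * (x$i * D i (D j f) x + D j f x + (\<Sum>v\<in>P. \<kappa> v * (2 / (v \<bullet> v)) * v$i * v$i * D j f (refl v x))
            - (x$j * D i (D i f) x + (if i = j then D i f x else 0) + (\<Sum>v\<in>P. \<kappa> v * (2 / (v \<bullet> v)) * v$j * v$i * D i f (refl v x)))))"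
    unfolding Jcal_def
    by (intro sum.cong refl) (clarsimp simp: Jf Jop_axis DJ CO[OF Dp[OF F]] simp flip: D_def)
  have EE: "euler_dunkl R u0 \<kappa> (euler_dunkl R u0 \<kappa> f) x =
     (\<Sum>i\<in>UNIV. x$i * (\<Sum>j\<in>UNIV. x$j * D i (D j f) x + (if i = j then D j f x else 0)
        + (\<Sum>v\<in>P. \<kappa> v * (2 / (v \<bullet> v)) * v$j * v$i * D j f (refl v x))))"
  proof -
    have e: "euler_dunkl R u0 \<kappa> f = (\<lambda>y. \<Sum>j\<in>UNIV. y$j * D j f y)"
      by (rule ext) (simp add: euler_dunkl_def D_def)
    have "D i (\<lambda>y. \<Sum>j\<in>UNIV. y$j * D j f y) x = (\<Sum>j\<in>UNIV. D i (\<lambda>y. y$j * D j f y) x)" for i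
      unfolding D_def by (rule dunkl_sum[OF nz]) (use Cp in \<open>auto simp: D_def\<close>)
    then show ?thesis
      by (simp add: euler_dunkl_def e CO[OF Dp[OF F]] flip: D_def)
  qed
  have RHS: "(x \<bullet> x) * dunkl_laplacian R u0 \<kappa> f x
       - euler_dunkl R u0 \<kappa> (euler_dunkl R u0 \<kappa> f) x
       - (real CARD('n) - 2) * euler_dunkl R u0 \<kappa> f x
       - 2 * (\<Sum>v\<in>pos_roots R u0. \<kappa> v * euler_dunkl R u0 \<kappa> f (refl v x))
     = (x \<bullet> x) * (\<Sum>i\<in>UNIV. D i (D i f) x)
     - (\<Sum>i\<in>UNIV. x$i * (\<Sum>j\<in>UNIV. x$j * D i (D j f) x + (if i = j then D j f x else 0)
        + (\<Sum>v\<in>P. \<kappa> v * (2 / (v \<bullet> v)) * v$j * v$i * D j f (refl v x))))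
     - (real CARD('n) - 2) * (\<Sum>i\<in>UNIV. x$i * D i f x)
     - 2 * (\<Sum>v\<in>P. \<kappa> v * (\<Sum>i\<in>UNIV. (refl v x)$i * D i f (refl v x)))"
    unfolding EE by (simp add: dunkl_laplacian_def euler_dunkl_def D_def P_def)
  show "Jcal R u0 \<kappa> f x = (x \<bullet> x) * dunkl_laplacian R u0 \<kappa> f x
       - euler_dunkl R u0 \<kappa> (euler_dunkl R u0 \<kappa> f) x
       - (real CARD('n) - 2) * euler_dunkl R u0 \<kappa> f x
       - 2 * (\<Sum>v\<in>pos_roots R u0. \<kappa> v * euler_dunkl R u0 \<kappa> f (refl v x))"
    unfolding LHS RHS
    by (rule alg[where d="\<lambda>i. D i f x" and dd="\<lambda>a b. D a (D b f) x" and s="\<lambda>v b. D b f (refl v x)"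
        and k=\<kappa> and V=P, OF fin nz[folded P_def]])
qed

end
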